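(* Let $n\ge1$. If $n\notin\{2^m-1,2^m,2^m+1\}$ for every $m\ge1$, then the maximally balanced tree $T^{mb}_n$ is not isomorphic to the GFB tree with $n$ leaves; in particular there are at least two non-isomorphic trees $T\in\mathcal{T}_n$ with $\mathcal{C}(T)=c_n$. If $n\in\{2^m-1,2^m,2^m+1\}$ for some $m\ge1$, then there is exactly one tree $T\in\mathcal{T}_n$ with $\mathcal{C}(T)=c_n$.
   Context: Bifurcating trees: rooted trees in which every internal node has exactly two children, considered up to isomorphism; $\mathcal{T}_n$ is the set of such trees with $n$ leaves. For a node $w$, $\kappa_T(w)$ is its number of descendant leaves. The Colless index is $\mathcal{C}(T)=\sum_{v}|\kappa_T(v_1)-\kappa_T(v_2)|$, summed over internal nodes $v$ with children $v_1,v_2$; $c_n=\min\{\mathcal{C}(T):T\in\mathcal{T}_n\}$. $T^{mb}_n$ is the unique tree in $\mathcal{T}_n$ in which at every internal node the numbers of descendant leaves of the two children differ by at most 1. GFB trees: start with a multiset of $n$ single-node trees; while the multiset has more than one tree, remove a tree $u$ with the minimum number of leaves, then remove a tree $v$ with the minimum number of leaves among the remaining trees, and insert the tree consisting of a new root whose two children are the roots of $u$ and $v$; the final tree is the GFB tree with $n$ leaves (it is unique up to isomorphism). *)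

theory Defs
  imports Main "HOL-Library.Multiset"
begin

text \<open>Bifurcating (binary) trees; trees are ordered here, and isomorphism
  (swapping children) is made explicit by the predicate btree_iso.\<close>
datatype btree = Leaf | Node btree btree

fun leaves :: "btree \<Rightarrow> nat" where
  "leaves Leaf = 1"
| "leaves (Node l r) = leaves l + leaves r"

definition natdist :: "nat \<Rightarrow> nat \<Rightarrow> nat" where
  "natdist a b = (if a \<le> b then b - a else a - b)"

fun colless :: "btree \<Rightarrow> nat" where
  "colless Leaf = 0"
| "colless (Node l r) = colless l + colless r + natdist (leaves l) (leaves r)"

inductive btree_iso :: "btree \<Rightarrow> btree \<Rightarrow> bool" where
  iso_leaf: "btree_iso Leaf Leaf"
| iso_same: "btree_iso a c \<Longrightarrow> btree_iso b d \<Longrightarrow> btree_iso (Node a b) (Node c d)"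
| iso_swap: "btree_iso a d \<Longrightarrow> btree_iso b c \<Longrightarrow> btree_iso (Node a b) (Node c d)"

definition min_colless :: "nat \<Rightarrow> nat" where
  "min_colless n = Min {colless T | T. leaves T = n}"

fun max_balanced :: "btree \<Rightarrow> bool" where
  "max_balanced Leaf = True"
| "max_balanced (Node l r) =
     (max_balanced l \<and> max_balanced r \<and> natdist (leaves l) (leaves r) \<le> 1)"

inductive gfb_step :: "btree multiset \<Rightarrow> btree multiset \<Rightarrow> bool" where
  "u \<in># M \<Longrightarrow> (\<forall>w \<in># M. leaves u \<le> leaves w) \<Longrightarrow>
   v \<in># M - {#u#} \<Longrightarrow> (\<forall>w \<in># M - {#u#}. leaves v \<le> leaves w) \<Longrightarrow>
   gfb_step M (M - {#u#} - {#v#} + {#Node u v#})"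

definition gfb_tree :: "nat \<Rightarrow> btree \<Rightarrow> bool" where
  "gfb_tree n T = gfb_step\<^sup>*\<^sup>* (replicate_mset n Leaf) {#T#}"

end

theory Submission
  imports Defs
begin


function g :: "nat \<Rightarrow> nat" where
  "g n = (if n \<le> 1 then 0 else g ((n+1) div 2) + g (n div 2) + n mod 2)"
  by auto
termination by (relation "measure id") auto

declare g.simps[simp del]

lemma oddsum: "Suc (a+a) mod 2 = Suc 0" by presburger

lemma halves: "(n+1) div 2 + n div 2 = (n::nat)" "(n+1) div 2 = n div 2 + n mod 2" by presburger+

lemma mod_add_le: "((a::nat)+b) mod 2 \<le> a mod 2 + b mod 2" by presburger

lemma g01[simp]: "g 0 = 0" "g (Suc 0) = 0" by (simp_all add: g.simps)

lemma g_rec: "n \<ge> 2 \<Longrightarrow> g n = g ((n+1) div 2) + g (n div 2) + n mod 2"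
  by (subst g.simps) simp

lemma g_split: assumes "x + y = n" "x \<le> y+1" "y \<le> x+1" "n \<ge> 2"
  shows "g n = g x + g y + n mod 2"
proof -
  have "(x = (n+1) div 2 \<and> y = n div 2) \<or> (y = (n+1) div 2 \<and> x = n div 2)" using assms by linarith
  then show ?thesis using g_rec[OF assms(4)] by auto
qed

lemma g_ineq: "g (a+b) \<le> g a + g b + natdist a b"
proof (induction "a+b" arbitrary: a b rule: less_induct)
  case less
  show ?case
  proof (cases "a = 0 \<or> b = 0")
    case True then show ?thesis by auto
  next
    case False
    have sym: "natdist a b = natdist b a" by (simp add: natdist_def)
    {
      fix a b assume ab: "a \<ge> 1" "a \<le> b"
        and IH: "\<And>x y. x + y < a + b \<Longrightarrow> g (x+y) \<le> g x + g y + natdist x y"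
      have "g (a+b) \<le> g a + g b + natdist a b"
      proof (cases "b \<le> a + 1")
        case True
        have "b = a \<or> b = a + 1" using True ab by linarith
        then have m: "(a+b) mod 2 = b - a" using oddsum by auto
        have "g (a+b) = g a + g b + (a+b) mod 2" using g_split[of a b "a+b"] ab True by simp
        moreover have "natdist a b = b - a" using ab by (simp add: natdist_def)
        ultimately show ?thesis using m by linarith
      next
        case False
        define a1 a2 b1 b2 where "a1 = (a+1) div 2" "a2 = a div 2" "b1 = (b+1) div 2" "b2 = b div 2"
        have ha: "a1 + a2 = a" "a1 = a2 + a mod 2" using halves[of a] a1_a2_b1_b2_def by auto
        have hb: "b1 + b2 = b" "b1 = b2 + b mod 2" using halves[of b] a1_a2_b1_b2_def by auto
        have ba: "a1 \<le> b2" using False unfolding a1_a2_b1_b2_def by linarith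
        have mm: "(a+b) mod 2 \<le> a mod 2 + b mod 2" by (rule mod_add_le)
        have gb: "g b = g b1 + g b2 + b mod 2" using g_rec[of b] False ab unfolding a1_a2_b1_b2_def by linarith
        have nd1: "natdist a1 b2 = b2 - a1" using ba by (simp add: natdist_def)
        have nd2: "natdist a2 b1 = b1 - a2" using ba ha hb unfolding natdist_def by auto
        have ndab: "natdist a b = b - a" using ab by (simp add: natdist_def)
        show ?thesis
        proof (cases "a = 1")
          case True
          have b1n: "b1 \<ge> 1" using hb False True by linarith
          have a12: "a1 = 1" "a2 = 0" using True a1_a2_b1_b2_def by auto
          have e: "g (a+b) = g (1 + b2) + g b1 + (a+b) mod 2"
            by (rule g_split) (use True False hb in linarith)+
          have "g (1 + b2) \<le> g 1 + g b2 + natdist 1 b2"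
            by (rule IH) (use True False hb b1n in linarith)
          then have "g (1 + b2) \<le> g b2 + (b2 - 1)" using nd1 a12 by simp
          then show ?thesis using e gb True mm ndab hb False by linarith
        next
          case a2: False
          have ga: "g a = g a1 + g a2 + a mod 2" using g_rec[of a] a2 ab unfolding a1_a2_b1_b2_def by linarith
          have e: "g (a+b) = g (a1 + b2) + g (a2+b1) + (a+b) mod 2"
            by (rule g_split) (use ha hb ab False in linarith)+
          have i1: "g (a1 + b2) \<le> g a1 + g b2 + natdist a1 b2"
            by (rule IH) (use ha hb ab False in linarith)
          have i2: "g (a2 + b1) \<le> g a2 + g b1 + natdist a2 b1"
            by (rule IH) (use ha hb ab False in linarith)
          show ?thesis using e i1 i2 ga gb nd1 nd2 ndab mm ha hb ba False ab by linarith
        qed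
      qed
    }
    note main = this
    show ?thesis
    proof (cases "a \<le> b")
      case True then show ?thesis using main[of a b] less False by auto
    next
      case f: False
      have "g (b+a) \<le> g b + g a + natdist b a" using main[of b a] less False f by (auto simp: add.commute)
      then show ?thesis using sym by (simp add: add.commute)
    qed
  qed
qed



function mbt :: "nat \<Rightarrow> btree" where
  "mbt n = (if n \<le> 1 then Leaf else Node (mbt ((n+1) div 2)) (mbt (n div 2)))"
  by auto
termination by (relation "measure id") auto

declare mbt.simps[simp del]

lemma mbt_rec: "n \<ge> 2 \<Longrightarrow> mbt n = Node (mbt ((n+1) div 2)) (mbt (n div 2))"
  by (subst mbt.simps) simp

lemma mbt1[simp]: "mbt (Suc 0) = Leaf" by (subst mbt.simps) simp

lemma mbt_props: "n \<ge> 1 \<Longrightarrow> leaves (mbt n) = n \<and> colless (mbt n) = g n \<and> max_balanced (mbt n)"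
proof (induction n rule: less_induct)
  case (less n)
  show ?case
  proof (cases "n = 1")
    case True then show ?thesis by simp
  next
    case False
    then have n2: "n \<ge> 2" using less.prems by linarith
    have h: "(n+1) div 2 + n div 2 = n" "(n+1) div 2 = n div 2 + n mod 2" using halves by auto
    have lt: "(n+1) div 2 < n" "n div 2 < n" "(n+1) div 2 \<ge> 1" "n div 2 \<ge> 1" using n2 h by linarith+
    have nd: "natdist ((n+1) div 2) (n div 2) = n mod 2" using h unfolding natdist_def by auto
    have "n mod 2 \<le> 1" by simp
    then show ?thesis using less.IH[of "(n+1) div 2"] less.IH[of "n div 2"] lt mbt_rec[OF n2] g_rec[OF n2] h nd
      by simp
  qed
qed

lemma leaves_pos: "leaves T \<ge> 1" by (induction T) auto

lemma colless_ge: "colless T \<ge> g (leaves T)"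
proof (induction T)
  case Leaf then show ?case by simp
next
  case (Node l r)
  then show ?case using g_ineq[of "leaves l" "leaves r"] by simp
qed

lemma colless_le: "colless T \<le> leaves T * leaves T"
proof (induction T)
  case Leaf then show ?case by simp
next
  case (Node l r)
  have p: "leaves l \<ge> 1" "leaves r \<ge> 1" by (rule leaves_pos)+
  have "natdist (leaves l) (leaves r) \<le> 2 * (leaves l * leaves r)"
  proof -
    have "leaves l \<le> leaves l * leaves r" "leaves r \<le> leaves l * leaves r" using p by simp_all
    moreover have "natdist (leaves l) (leaves r) \<le> leaves l + leaves r" unfolding natdist_def by auto
    ultimately show ?thesis by linarith
  qed
  moreover have "leaves (Node l r) * leaves (Node l r) = leaves l * leaves l + leaves r * leaves r + 2 * leaves l * leaves r"
    by (simp add: algebra_simps)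
  ultimately show ?case using Node by simp
qed

lemma min_colless_eq: assumes "n \<ge> 1" shows "min_colless n = g n"
proof -
  let ?S = "{colless T | T. leaves T = n}"
  have fin: "finite ?S" by (rule finite_subset[of _ "{..n*n}"]) (use colless_le in auto)
  have mem: "g n \<in> ?S" using mbt_props[OF assms] by force
  have lb: "\<forall>y\<in>?S. g n \<le> y" using colless_ge by auto
  show ?thesis unfolding min_colless_def using fin mem lb by (meson Min_eqI)
qed

lemma iso_leaves: "btree_iso a b \<Longrightarrow> leaves a = leaves b"
  by (induction rule: btree_iso.induct) auto

lemma natdist_sym: "natdist a b = natdist b a" by (simp add: natdist_def)

lemma iso_mb: "btree_iso a b \<Longrightarrow> max_balanced a \<Longrightarrow> max_balanced b"
proof (induction rule: btree_iso.induct)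
  case iso_leaf then show ?case by simp
next
  case (iso_same a c b d) then show ?case using iso_leaves[OF iso_same.hyps(1)] iso_leaves[OF iso_same.hyps(2)] by simp
next
  case (iso_swap a d b c) then show ?case using iso_leaves[OF iso_swap.hyps(1)] iso_leaves[OF iso_swap.hyps(2)]
    by (simp add: natdist_sym)
qed

lemma iso_refl: "btree_iso a a"
  by (induction a) (auto intro: btree_iso.intros)

lemma iso_sym: "btree_iso a b \<Longrightarrow> btree_iso b a"
  by (induction rule: btree_iso.induct) (auto intro: btree_iso.intros)

lemma iso_trans: "btree_iso a b \<Longrightarrow> btree_iso b c \<Longrightarrow> btree_iso a c"
proof (induction arbitrary: c rule: btree_iso.induct)
  case iso_leaf then show ?case by simp
next
  case (iso_same a c' b d)
  from iso_same.prems show ?case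
    by (cases rule: btree_iso.cases) (auto intro: btree_iso.intros iso_same.IH)
next
  case (iso_swap a d b c')
  from iso_swap.prems show ?case
    by (cases rule: btree_iso.cases) (auto intro: btree_iso.intros iso_swap.IH)
qed

lemma noniso_left: "\<not> btree_iso T1 T2 \<Longrightarrow> \<not> btree_iso (Node T1 X) (Node T2 X)"
  by (auto elim: btree_iso.cases intro: iso_trans iso_sym)

lemma noniso_right: "\<not> btree_iso T1 T2 \<Longrightarrow> \<not> btree_iso (Node X T1) (Node X T2)"
  by (auto elim: btree_iso.cases intro: iso_trans iso_sym)



definition exc :: "nat \<Rightarrow> bool" where
  "exc n \<longleftrightarrow> (\<exists>m\<ge>1. n \<in> {2^m - 1, 2^m, 2^m + 1})"

lemma d2: "(2*x) div 2 = (x::nat)" "(2*x+1) div 2 = x" "(2*x+1) mod 2 = 1" "(2*x) mod 2 = 0"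
  "(2*x+2) div 2 = x+1" by presburger+

lemma g_pow: "g (2^m) = 0"
proof (induction m)
  case 0 then show ?case by simp
next
  case (Suc m)
  have "(2::nat)^m \<ge> 1" by simp
  then have "g (2*2^m) = g ((2*2^m+1) div 2) + g ((2*2^m) div 2) + (2*2^m) mod 2"
    by (intro g_rec) simp
  then show ?case using Suc d2[of "2^m"] by simp
qed

lemma g_powp1: "g (2^(Suc k) + 1) = Suc k"
proof (induction k)
  case 0
  have "g 3 = g 2 + g 1 + 1" using g_rec[of 3] by simp
  moreover have "g 2 = 0" using g_pow[of 1] by simp
  ultimately show ?case by simp
next
  case (Suc k)
  let ?x = "2^(Suc k)::nat"
  have "g (2*?x+1) = g ((2*?x+1+1) div 2) + g ((2*?x+1) div 2) + (2*?x+1) mod 2"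
    by (intro g_rec) simp
  moreover have "(2*?x+1+1) div 2 = ?x + 1" using d2(5)[of ?x] by simp
  ultimately have "g (2*?x+1) = Suc (Suc k)" using Suc d2[of ?x] g_pow[of "Suc k"] by simp
  then show ?case by (simp add: mult.commute)
qed

lemma g_powm1: "g (2^(Suc k) - 1) = k"
proof (induction k)
  case 0 then show ?case by simp
next
  case (Suc k)
  let ?x = "2^(Suc k)::nat"
  have x2: "?x \<ge> 2" by (simp add: Suc_leI)
  have "g (2*?x-1) = g ((2*?x-1+1) div 2) + g ((2*?x-1) div 2) + (2*?x-1) mod 2"
    by (intro g_rec) (use x2 in linarith)
  moreover have "(2*?x-1+1) div 2 = ?x" using x2 by simp
  moreover have "(2*?x-1) div 2 = ?x - 1" "(2*?x-1) mod 2 = 1"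
  proof -
    have e: "2*?x-1 = 2*(?x-1)+1" using x2 by linarith
    show "(2*?x-1) div 2 = ?x - 1" unfolding e by (rule d2)
    show "(2*?x-1) mod 2 = 1" unfolding e by (rule d2)
  qed
  ultimately have "g (2*?x-1) = Suc k" using Suc g_pow[of "Suc k"] by simp
  then show ?case by (simp add: mult.commute)
qed

lemma g_lb: "2^k < x \<Longrightarrow> x < 2^(k+1) \<Longrightarrow> k \<le> g x"
proof (induction x arbitrary: k rule: less_induct)
  case (less x)
  show ?case
  proof (cases k)
    case 0 then show ?thesis by simp
  next
    case (Suc j)
    have pk: "(2::nat)^k = 2 * 2^j" "(2::nat)^(k+1) = 2 * (2 * 2^j)" using Suc by simp_all
    have pj: "(2::nat)^(j+1) = 2 * 2^j" by simp
    have "(2::nat)^j \<ge> 1" by simp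
    then have x2: "x \<ge> 2" using less.prems pk by linarith
    have "x = 2*(x div 2) \<or> x = 2*(x div 2)+1" by presburger
    then obtain y where y: "x = 2*y \<or> x = 2*y+1" by blast
    show ?thesis
    proof (cases "x = 2*y")
      case True
      have gx: "g x = g y + g y" using g_rec[OF x2] True d2[of y] by simp
      have yb: "2^j < y" "y < 2^(j+1)" using less.prems pk pj True by linarith+
      have "j \<le> g y" using less.IH[of y j] yb True x2 by linarith
      moreover have "j \<ge> 1" proof (rule ccontr)
        assume "\<not> j \<ge> 1" then have "j = 0" by simp
        then show False using yb by simp
      qed
      ultimately show ?thesis using gx Suc by linarith
    next
      case False
      then have xo: "x = 2*y+1" using y by simp
      have gx: "g x = g (y+1) + g y + 1" using g_rec[OF x2] xo d2[of y] by (simp add: d2(5)[of y, simplified])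
      have yb: "2^j \<le> y" "y < 2^(j+1)" using less.prems pk pj xo by linarith+
      show ?thesis
      proof (cases "j = 0")
        case True then show ?thesis using gx Suc by simp
      next
        case jn: False
        have "j \<le> g y + g (y+1)"
        proof (cases "y = 2^j")
          case True
          have "(2::nat)^j \<ge> 2^1" by (rule power_increasing) (use jn in auto)
          then have "j \<le> g (y+1)" using less.IH[of "y+1" j] True xo pj by simp
          then show ?thesis by simp
        next
          case False
          then have "j \<le> g y" using less.IH[of y j] yb xo by simp
          then show ?thesis by simp
        qed
        then show ?thesis using gx Suc by simp
      qed
    qed
  qed
qed



lemma exc_cases: assumes "exc n" obtains k where "n = 2*2^k - 1 \<or> n = 2*2^k \<or> n = 2*2^k+1"
proof -
  obtain m where m: "m \<ge> 1" "n \<in> {2^m - 1, 2^m, 2^m + 1}" using assms unfolding exc_def by blast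
  then obtain k where "m = Suc k" by (cases m) auto
  then show ?thesis using that m by auto
qed

lemma exc_pow: "exc (2^k)"
proof (cases k)
  case 0 then show ?thesis unfolding exc_def by (intro exI[of _ 1]) simp
next
  case (Suc j) then show ?thesis unfolding exc_def by (intro exI[of _ k]) simp
qed

lemma exc_powp1: "exc (2^k+1)"
proof (cases k)
  case 0 then show ?thesis unfolding exc_def by (intro exI[of _ 1]) simp
next
  case (Suc j) then show ?thesis unfolding exc_def by (intro exI[of _ k]) simp
qed

lemma exc_powm1: "k \<ge> 1 \<Longrightarrow> exc (2^k-1)"
  unfolding exc_def by (intro exI[of _ k]) simp

lemma exc_halves: assumes "exc n" "n \<ge> 2" shows "exc ((n+1) div 2)" "exc (n div 2)"
proof -
  obtain k where k: "n = 2*2^k - 1 \<or> n = 2*2^k \<or> n = 2*2^k+1" using exc_cases[OF assms(1)] by blast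
  have "exc ((n+1) div 2) \<and> exc (n div 2)"
  proof -
    { assume n: "n = 2*2^k - 1"
      have k1: "k \<ge> 1" proof (rule ccontr) assume "\<not> k \<ge> 1" then have "k = 0" by simp
        then show False using n assms(2) by simp qed
      have p: "(2::nat)^k \<ge> 1" by simp
      have e: "n = 2*(2^k - 1) + 1" using n p by linarith
      have "(n+1) div 2 = 2^k" using n p by simp
      moreover have "n div 2 = 2^k - 1" unfolding e by (rule d2)
      ultimately have ?thesis using exc_pow exc_powm1[OF k1] by simp }
    moreover
    { assume n: "n = 2*2^k"
      then have ?thesis using exc_pow[of k] d2[of "2^k"] by simp }
    moreover
    { assume n: "n = 2*2^k + 1"
      then have "(n+1) div 2 = 2^k+1" "n div 2 = 2^k" using d2[of "2^k"] by simp_all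
      then have ?thesis using exc_pow[of k] exc_powp1[of k] by simp }
    ultimately show ?thesis using k by blast
  qed
  then show "exc ((n+1) div 2)" "exc (n div 2)" by simp_all
qed

lemma split_opt: assumes "exc n" "a + b = n" "1 \<le> a" "a + 2 \<le> b"
  shows "g n < g a + g b + natdist a b"
proof -
  have nd: "natdist a b = b - a" using assms by (simp add: natdist_def)
  obtain k where k: "n = 2*2^k - 1 \<or> n = 2*2^k \<or> n = 2*2^k+1" using exc_cases[OF assms(1)] by blast
  have p: "(2::nat)^k \<ge> 1" by simp
  have kl: "k < 2^k" by (rule less_exp)
  have p1: "(2::nat)^(k+1) = 2*2^k" by simp
  { assume n: "n = 2*2^k"
    have "g n = 0" using g_pow[of "Suc k"] n by simp
    then have ?thesis using nd assms by linarith }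
  moreover
  { assume n: "n = 2*2^k - 1"
    have gn: "g n = k" using g_powm1[of k] n by simp
    have "2^k < b" "b < 2^(k+1)" using n assms p p1 by linarith+
    then have "k \<le> g b" by (rule g_lb)
    then have ?thesis using gn nd assms by linarith }
  moreover
  { assume n: "n = 2*2^k+1"
    have gn: "g n = Suc k" using g_powp1[of k] n by simp
    have ?thesis
    proof (cases "b = 2*2^k")
      case True
      then have "a = 1" using n assms by linarith
      then show ?thesis using gn nd True kl assms by linarith
    next
      case False
      have "2^k < b" "b < 2^(k+1)" using n assms p p1 False by linarith+
      then have "k \<le> g b" by (rule g_lb)
      then show ?thesis using gn nd assms by linarith
    qed }
  ultimately show ?thesis using k by blast
qed

lemma unique_exc: "exc n \<Longrightarrow> leaves T = n \<Longrightarrow> colless T = g n \<Longrightarrow> btree_iso T (mbt n)"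
proof (induction n arbitrary: T rule: less_induct)
  case (less n)
  show ?case
  proof (cases T)
    case Leaf
    then have "n = 1" using less.prems by simp
    then show ?thesis using Leaf by (simp add: btree_iso.intros)
  next
    case (Node l r)
    define a b where "a = leaves l" "b = leaves r"
    have ab: "a \<ge> 1" "b \<ge> 1" using leaves_pos a_b_def by auto
    have n: "n = a + b" using less.prems Node a_b_def by simp
    have n2: "n \<ge> 2" using n ab by linarith
    have cl: "colless l \<ge> g a" "colless r \<ge> g b" using colless_ge a_b_def by auto
    have gi: "g n \<le> g a + g b + natdist a b" using g_ineq n by simp
    have ct: "colless l + colless r + natdist a b = g n" using less.prems Node a_b_def by simp
    have eqs: "colless l = g a" "colless r = g b" "g a + g b + natdist a b = g n" using cl gi ct by linarith+
    have "\<not> a + 2 \<le> b"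
    proof
      assume h: "a + 2 \<le> b"
      have "g n < g a + g b + natdist a b" by (rule split_opt[OF less.prems(1) n[symmetric] ab(1) h])
      then show False using eqs(3) by linarith
    qed
    moreover have "\<not> b + 2 \<le> a"
    proof
      assume h: "b + 2 \<le> a"
      have "g n < g b + g a + natdist b a" by (rule split_opt[OF less.prems(1) _ ab(2) h]) (use n in simp)
      then show False using eqs(3) natdist_sym[of a b] by linarith
    qed
    ultimately have spl: "(a = (n+1) div 2 \<and> b = n div 2) \<or> (b = (n+1) div 2 \<and> a = n div 2)"
      using n halves[of n] by linarith
    moreover have ex: "exc ((n+1) div 2)" "exc (n div 2)" using exc_halves[OF less.prems(1) n2] by auto
    have lt: "a < n" "b < n" using n ab by linarith+
    have ea: "exc a" "exc b" using spl ex by auto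
    have il: "btree_iso l (mbt a)" using less.IH[OF lt(1) ea(1)] eqs(1) a_b_def by blast
    have ir: "btree_iso r (mbt b)" using less.IH[OF lt(2) ea(2)] eqs(2) a_b_def by blast
    have "(btree_iso l (mbt ((n+1) div 2)) \<and> btree_iso r (mbt (n div 2))) \<or>
                     (btree_iso r (mbt ((n+1) div 2)) \<and> btree_iso l (mbt (n div 2)))"
      using il ir spl by metis
    then show ?thesis using Node mbt_rec[OF n2] by (auto intro: btree_iso.intros)
  qed
qed



lemma par: "2*(x::nat) \<noteq> 2*y+1" by presburger

lemma pow_succ: assumes "(2::nat)^j = 2^k + 1" shows "k = 0"
proof (rule ccontr)
  assume "k \<noteq> 0"
  then obtain k' where k: "k = Suc k'" by (cases k) auto
  show False
  proof (cases j)
    case 0 then show ?thesis using assms by simp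
  next
    case (Suc j') then show ?thesis using assms k par[of "2^j'" "2^k'"] by simp
  qed
qed

lemma pow_plus2: assumes "(2::nat)^i + 2 = 2^j" shows "i = 1"
proof (cases i)
  case 0
  then show ?thesis
  proof (cases j)
    case 0 then show ?thesis using assms \<open>i = 0\<close> by simp
  next
    case (Suc j') then show ?thesis using assms \<open>i = 0\<close> par[of "2^j'" 1] by simp
  qed
next
  case (Suc i')
  then show ?thesis
  proof (cases j)
    case 0 then show ?thesis using assms by simp
  next
    case (Suc j')
    then have "(2::nat)^j' = 2^i' + 1" using assms \<open>i = Suc i'\<close> by simp
    then have "i' = 0" by (rule pow_succ)
    then show ?thesis using \<open>i = Suc i'\<close> by simp
  qed
qed

definition pw :: "nat \<Rightarrow> bool" where "pw x \<longleftrightarrow> (\<exists>j. x = 2^j)"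
definition okn :: "nat \<Rightarrow> bool" where "okn x \<longleftrightarrow> (\<exists>j. x = 2^j \<or> x = 2^j + 1 \<or> x = 2^j - 1)"

lemma pw_okn: "pw x \<Longrightarrow> okn x" unfolding pw_def okn_def by blast

lemma pw1: "pw 1" "pw 2" unfolding pw_def by (metis power_0, metis power_one_right)

lemma nonpw: "okn y \<Longrightarrow> \<not> pw y \<Longrightarrow> \<exists>j. y = 2^j + 1 \<or> y = 2^j - 1"
  unfolding okn_def pw_def by blast

lemma merge:
  assumes "okn x" "okn y" "1 \<le> x" "x \<le> y" "y \<le> x+1" "pw x \<or> pw y"
  shows "okn (x+y) \<and> (\<not> pw (x+y) \<longrightarrow> \<not> pw x \<or> \<not> pw y \<or> (x = 1 \<and> y = 2))"
proof (cases "y = x")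
  case True
  then have "pw x" using assms by simp
  then obtain j where "x = 2^j" unfolding pw_def by blast
  then have "pw (x+y)" using True unfolding pw_def by (intro exI[of _ "Suc j"]) simp
  then show ?thesis using pw_okn by blast
next
  case False
  then have y: "y = x + 1" using assms by simp
  show ?thesis
  proof (cases "pw x \<and> pw y")
    case True
    then obtain i j where ij: "x = 2^i" "y = 2^j" unfolding pw_def by blast
    then have "i = 0" using y pow_succ[of j i] by simp
    then have "x = 1" "y = 2" using ij y by simp_all
    moreover have "x + y = 2^1 + 1" using calculation by simp
    then have "okn (x+y)" unfolding okn_def by blast
    ultimately show ?thesis by blast
  next
    case False
    show ?thesis
    proof (cases "pw x")
      case True
      then have ny: "\<not> pw y" using False by simp
      obtain i where i: "x = 2^i" using True unfolding pw_def by blast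
      obtain j where "y = 2^j + 1 \<or> y = 2^j - 1" using nonpw[OF assms(2) ny] by blast
      moreover
      { assume "y = 2^j + 1"
        then have "x = 2^j" using y by simp
        then have "okn (x+y)" unfolding okn_def using \<open>y = 2^j + 1\<close> by (intro exI[of _ "Suc j"]) simp }
      moreover
      { assume h: "y = 2^j - 1"
        have "(2::nat)^i + 2 = 2^j" using h y i by simp
        then have "i = 1" by (rule pow_plus2)
        then have "x + y = 2^2 + 1" using i y by simp
        then have "okn (x+y)" unfolding okn_def by blast }
      ultimately show ?thesis using ny by blast
    next
      case nx: False
      then have py: "pw y" using assms by simp
      obtain i where i: "y = 2^i" using py unfolding pw_def by blast
      obtain j where "x = 2^j + 1 \<or> x = 2^j - 1" using nonpw[OF assms(1) nx] by blast
      moreover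
      { assume h: "x = 2^j + 1"
        have "(2::nat)^j + 2 = 2^i" using h y i by simp
        then have "j = 1" by (rule pow_plus2)
        then have "x + y = 2^3 - 1" using h y by simp
        then have "okn (x+y)" unfolding okn_def by blast }
      moreover
      { assume h: "x = 2^j - 1"
        then have "y = 2^j" using y assms(3) by simp
        then have "x + y = 2^(Suc j) - 1" using h by simp
        then have "okn (x+y)" unfolding okn_def by blast }
      ultimately show ?thesis using nx by blast
    qed
  qed
qed



definition NP :: "btree multiset \<Rightarrow> nat" where
  "NP M = size (filter_mset (\<lambda>t. \<not> pw (leaves t)) M)"

definition Inv :: "btree multiset \<Rightarrow> bool" where
  "Inv M \<longleftrightarrow> (\<forall>t\<in>#M. okn (leaves t)) \<and> NP M \<le> 1 \<and>
     ((\<exists>t\<in>#M. leaves t = 1) \<longrightarrow> (\<forall>t\<in>#M. leaves t \<le> 2))"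

lemma NP_add: "NP (add_mset t M) = NP M + (if pw (leaves t) then 0 else 1)"
  unfolding NP_def by simp

lemma NP_zero: "(\<forall>t\<in>#M. pw (leaves t)) \<Longrightarrow> NP M = 0"
  unfolding NP_def by simp

lemma le2_pw: "leaves t \<le> 2 \<Longrightarrow> pw (leaves t)"
proof -
  assume "leaves t \<le> 2"
  moreover have "leaves t \<ge> 1" by (rule leaves_pos)
  ultimately have "leaves t = 1 \<or> leaves t = 2" by linarith
  then show ?thesis using pw1 by auto
qed

lemma step_inv:
  assumes I: "Inv (add_mset u (add_mset v M0))"
    and mu: "\<forall>w\<in>#add_mset u (add_mset v M0). leaves u \<le> leaves w"
    and mv: "\<forall>w\<in>#add_mset v M0. leaves v \<le> leaves w"
    and nd: "natdist (leaves u) (leaves v) \<le> 1"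
  shows "Inv (add_mset (Node u v) M0)"
proof -
  define x y where "x = leaves u" "y = leaves v"
  have xy: "x \<le> y" using mu x_y_def by simp
  have yx: "y \<le> x + 1" using nd xy x_y_def unfolding natdist_def by auto
  have x1: "1 \<le> x" using leaves_pos x_y_def by simp
  have ok: "okn x" "okn y" "\<forall>t\<in>#M0. okn (leaves t)" using I x_y_def unfolding Inv_def by auto
  have np: "(if pw x then 0 else 1) + (if pw y then 0 else 1) + NP M0 \<le> (1::nat)"
    using I x_y_def unfolding Inv_def by (simp add: NP_add)
  have third: "(\<exists>t\<in>#add_mset u (add_mset v M0). leaves t = 1) \<longrightarrow>
      (\<forall>t\<in>#add_mset u (add_mset v M0). leaves t \<le> 2)" using I unfolding Inv_def by blast
  have pxy: "pw x \<or> pw y" using np by (auto split: if_splits)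
  have m: "okn (x+y) \<and> (\<not> pw (x+y) \<longrightarrow> \<not> pw x \<or> \<not> pw y \<or> (x = 1 \<and> y = 2))"
    by (rule merge[OF ok(1) ok(2) x1 xy yx pxy])
  have lnode: "leaves (Node u v) = x + y" using x_y_def by simp
  have c1: "\<forall>t\<in>#add_mset (Node u v) M0. okn (leaves t)" using m ok(3) lnode by simp
  have c2: "NP (add_mset (Node u v) M0) \<le> 1"
  proof (cases "pw (x+y)")
    case True then show ?thesis using np lnode by (simp add: NP_add split: if_splits)
  next
    case False
    then have "\<not> pw x \<or> \<not> pw y \<or> (x = 1 \<and> y = 2)" using m by blast
    moreover
    { assume "x = 1 \<and> y = 2"
      then have "\<forall>t\<in>#M0. leaves t \<le> 2" using third x_y_def by auto
      then have "NP M0 = 0" using le2_pw NP_zero by blast }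
    ultimately have "NP M0 = 0" using np by (auto split: if_splits)
    then show ?thesis by (simp add: NP_add)
  qed
  have c3: "(\<exists>t\<in>#add_mset (Node u v) M0. leaves t = 1) \<longrightarrow> (\<forall>t\<in>#add_mset (Node u v) M0. leaves t \<le> 2)"
  proof
    assume "\<exists>t\<in>#add_mset (Node u v) M0. leaves t = 1"
    then obtain t where t: "t \<in># M0" "leaves t = 1" using lnode x1 xy x_y_def by auto
    then have "x \<le> 1" "y \<le> 1" using mu mv x_y_def by auto
    then have "x = 1" "y = 1" using x1 xy by linarith+
    moreover have "\<forall>t\<in>#M0. leaves t \<le> 2" using third t by auto
    ultimately show "\<forall>t\<in>#add_mset (Node u v) M0. leaves t \<le> 2" using lnode by simp
  qed
  show ?thesis unfolding Inv_def using c1 c2 c3 by blast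
qed

lemma run_inv:
  assumes "gfb_step\<^sup>*\<^sup>* M0 M" "M0 = replicate_mset n Leaf"
  shows "(\<forall>t\<in>#M. max_balanced t) \<Longrightarrow> Inv M"
  using assms(1)
proof (induction rule: rtranclp_induct)
  case base
  have "okn 1" unfolding okn_def by (intro exI[of _ 0]) simp
  moreover have "NP M0 = 0" using assms(2) pw1 by (intro NP_zero) auto
  ultimately show ?case using assms(2) pw1 unfolding Inv_def by auto
next
  case (step M1 M2)
  from step.hyps(2) obtain u v where
    u: "u \<in># M1" "\<forall>w\<in>#M1. leaves u \<le> leaves w" and
    v: "v \<in># M1 - {#u#}" "\<forall>w\<in>#M1 - {#u#}. leaves v \<le> leaves w" and
    M2: "M2 = M1 - {#u#} - {#v#} + {#Node u v#}"
    by (cases rule: gfb_step.cases) blast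
  define M0 where "M0 = M1 - {#u#} - {#v#}"
  have e1: "M1 - {#u#} = add_mset v M0" unfolding M0_def by (simp only: insert_DiffM[OF v(1)])
  have e2: "M1 = add_mset u (add_mset v M0)" using u(1) e1 by (metis insert_DiffM)
  have e3: "M2 = add_mset (Node u v) M0" using M2 M0_def by simp
  have mbn: "max_balanced (Node u v)" "\<forall>t\<in>#M0. max_balanced t" using step.prems e3 by auto
  then have "\<forall>t\<in>#M1. max_balanced t" using e2 by auto
  then have "Inv M1" by (rule step.IH)
  then show ?case unfolding e3 using step_inv[of u v M0] e2 e1 u(2) v(2) mbn(1) by simp
qed

lemma gfb_mb_exc:
  assumes "gfb_tree n T" "max_balanced T"
  shows "exc (leaves T)"
proof -
  have "Inv {#T#}" using run_inv[OF assms(1)[unfolded gfb_tree_def] refl] assms(2) by simp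
  then have ok: "okn (leaves T)" unfolding Inv_def by simp
  have l1: "leaves T \<ge> 1" by (rule leaves_pos)
  obtain j where "leaves T = 2^j \<or> leaves T = 2^j + 1 \<or> leaves T = 2^j - 1" using ok unfolding okn_def by blast
  moreover
  { assume h: "leaves T = 2^j - 1"
    have "j \<ge> 1" proof (rule ccontr) assume "\<not> j \<ge> 1" then have "j = 0" by simp then show False using h l1 by simp qed
    then have ?thesis using h exc_powm1 by simp }
  ultimately show ?thesis using exc_pow exc_powp1 by auto
qed



lemma nonexc_even: assumes "\<not> exc (2*p)" "exc p" shows "p = 2 * ((p - 1) div 2) + 1 \<and> p \<ge> 3"
proof -
  obtain k where k: "p = 2*2^k - 1 \<or> p = 2*2^k \<or> p = 2*2^k+1" using exc_cases[OF assms(2)] by blast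
  have pk: "(2::nat)^k \<ge> 1" by simp
  have np: "\<not> p = 2*2^k" proof assume "p = 2*2^k" then have "2*p = 2^(Suc (Suc k))" by simp
    then show False using assms(1) exc_pow by metis qed
  have n1: "p \<noteq> 1" proof assume "p = 1" then have "2*p = 2^1" by simp
    then show False using assms(1) exc_pow by metis qed
  { assume h: "p = 2*2^k - 1"
    then have "p = 2*(2^k - 1) + 1" using pk by linarith
    then have "(p - 1) div 2 = 2^k - 1" by simp
    moreover have "(2::nat)^k \<ge> 2"
    proof (rule ccontr)
      assume "\<not> (2::nat)^k \<ge> 2" then have "(2::nat)^k = 1" using pk by linarith
      then show False using h n1 by simp
    qed
    ultimately have ?thesis using h by linarith }
  moreover
  { assume h: "p = 2*2^k + 1"
    then have "(p - 1) div 2 = 2^k" by simp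
    then have ?thesis using h pk by linarith }
  ultimately show ?thesis using k np by blast
qed

lemma exc_odd: assumes "exc p" "exc (p+1)" shows "exc (2*p+1)"
proof -
  obtain k where k: "p = 2*2^k - 1 \<or> p = 2*2^k \<or> p = 2*2^k+1" using exc_cases[OF assms(1)] by blast
  obtain j where j: "p+1 = 2*2^j - 1 \<or> p+1 = 2*2^j \<or> p+1 = 2*2^j+1" using exc_cases[OF assms(2)] by blast
  have pk: "(2::nat)^k \<ge> 1" "(2::nat)^j \<ge> 1" by simp_all
  { assume h: "p = 2*2^k - 1"
    then have "2*p+1 = 4*2^k - 1" using pk by linarith
    then have "2*p+1 = 2^(Suc (Suc k)) - 1" by simp
    then have ?thesis using exc_powm1[of "Suc (Suc k)"] by simp }
  moreover
  { assume h: "p = 2*2^k"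
    then have "2*p+1 = 2^(Suc (Suc k)) + 1" by simp
    then have ?thesis using exc_powp1[of "Suc (Suc k)"] by simp }
  moreover
  { assume h: "p = 2*2^k + 1"
    have "p + 1 = 2*2^j"
    proof -
      have "\<not> p + 1 = 2*2^j - 1"
      proof
        assume "p + 1 = 2*2^j - 1"
        moreover have "2*((2::nat)^j - 1) = 2*2^j - 2" by (simp add: diff_mult_distrib2)
        moreover have "2*((2::nat)^k + 1) = 2*2^k + 2" by simp
        ultimately have "2*(2^k+1) = 2*(2^j - 1)+(1::nat)" using h pk by linarith
        then show False using par[of "2^k+1" "2^j - 1"] by blast
      qed
      moreover have "\<not> p + 1 = 2*2^j + 1"
      proof
        assume "p + 1 = 2*2^j + 1"
        moreover have "2*((2::nat)^k + 1) = 2*2^k + 2" by simp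
        ultimately have "2*(2^k+1) = 2*2^j+(1::nat)" using h by linarith
        then show False using par[of "2^k+1" "2^j"] by blast
      qed
      ultimately show ?thesis using j by blast
    qed
    then have "(2::nat)^j = 2^k + 1" using h by simp
    then have "k = 0" by (rule pow_succ)
    then have "2*p+1 = 2^3 - 1" using h by simp
    then have ?thesis using exc_powm1[of 3] by simp }
  ultimately show ?thesis using k by blast
qed

lemma g_double: "p \<ge> 1 \<Longrightarrow> g (2*p) = g p + g p"
  using g_rec[of "2*p"] d2[of p] by simp

lemma g_odd: "p \<ge> 1 \<Longrightarrow> g (2*p+1) = g (p+1) + g p + 1"
  using g_rec[of "2*p+1"] d2[of p] by (simp add: d2(5)[of p, simplified])

lemma two_opt: "n \<ge> 1 \<Longrightarrow> \<not> exc n \<Longrightarrow> \<exists>T1 T2. leaves T1 = n \<and> leaves T2 = n \<and>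
   colless T1 = g n \<and> colless T2 = g n \<and> \<not> btree_iso T1 T2"
proof (induction n rule: less_induct)
  case (less n)
  have "n = 2*(n div 2) \<or> n = 2*(n div 2)+1" by presburger
  then obtain p where p: "n = 2*p \<or> n = 2*p+1" by blast
  have p1: "p \<ge> 1"
  proof (rule ccontr)
    assume "\<not> p \<ge> 1" then have "p = 0" by simp
    then have "n = 0 \<or> n = 1" using p by simp
    moreover have "exc 1" using exc_pow[of 0] by simp
    ultimately show False using less.prems by auto
  qed
  have mp: "leaves (mbt p) = p" "colless (mbt p) = g p" "leaves (mbt (p+1)) = p+1" "colless (mbt (p+1)) = g (p+1)"
    using mbt_props p1 by auto
  show ?case
  proof (cases "n = 2*p")
    case ev: True
    show ?thesis
    proof (cases "exc p")
      case False
      then obtain T1 T2 where T: "leaves T1 = p" "leaves T2 = p" "colless T1 = g p" "colless T2 = g p"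
        "\<not> btree_iso T1 T2" using less.IH[of p] p1 ev by auto
      have "colless (Node T1 (mbt p)) = g n" "colless (Node T2 (mbt p)) = g n"
        using T mp ev g_double[OF p1] by (simp_all add: natdist_def)
      moreover have "leaves (Node T1 (mbt p)) = n" "leaves (Node T2 (mbt p)) = n" using T mp ev by simp_all
      ultimately show ?thesis using noniso_left[OF T(5)] by blast
    next
      case True
      have o: "p = 2 * ((p - 1) div 2) + 1 \<and> p \<ge> 3" using nonexc_even[of p] True less.prems ev by simp
      define q where "q = (p - 1) div 2"
      have q: "p = 2*q+1" "q \<ge> 1" using o q_def by linarith+
      have mq: "leaves (mbt (2*q)) = 2*q" "colless (mbt (2*q)) = g (2*q)"
        "leaves (mbt (2*q+2)) = 2*q+2" "colless (mbt (2*q+2)) = g (2*q+2)" using mbt_props q by auto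
      have mn: "leaves (mbt n) = n" "colless (mbt n) = g n" using mbt_props less.prems by auto
      have gq: "g (2*q+2) = g (q+1) + g (q+1)" using g_double[of "q+1"] by (simp add: algebra_simps)
      have "colless (Node (mbt (2*q)) (mbt (2*q+2))) = g n"
        using mq gq g_double[OF q(2)] g_double[OF p1] g_odd[OF q(2)] ev q by (simp add: natdist_def)
      moreover have "leaves (Node (mbt (2*q)) (mbt (2*q+2))) = n" using mq ev q by simp
      moreover have "\<not> btree_iso (mbt n) (Node (mbt (2*q)) (mbt (2*q+2)))"
      proof
        assume h: "btree_iso (mbt n) (Node (mbt (2*q)) (mbt (2*q+2)))"
        have "n \<ge> 2" using ev p1 by simp
        then have "mbt n = Node (mbt p) (mbt p)" using mbt_rec[of n] ev d2[of p] by simp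
        then have "btree_iso (Node (mbt p) (mbt p)) (Node (mbt (2*q)) (mbt (2*q+2)))" using h by simp
        then have "leaves (mbt p) = leaves (mbt (2*q)) \<or> leaves (mbt p) = leaves (mbt (2*q+2))"
          by (cases rule: btree_iso.cases) (auto dest: iso_leaves)
        then show False using mp mq q by simp
      qed
      ultimately show ?thesis using mn by blast
    qed
  next
    case od: False
    then have od: "n = 2*p+1" using p by simp
    have gn: "g n = g (p+1) + g p + 1" using g_odd[OF p1] od by simp
    have "\<not> exc p \<or> \<not> exc (p+1)" using exc_odd less.prems od by blast
    then show ?thesis
    proof
      assume ne: "\<not> exc p"
      then obtain T1 T2 where T: "leaves T1 = p" "leaves T2 = p" "colless T1 = g p" "colless T2 = g p"
        "\<not> btree_iso T1 T2" using less.IH[of p] p1 od by auto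
      have "colless (Node (mbt (p+1)) T1) = g n" "colless (Node (mbt (p+1)) T2) = g n"
        using T mp gn by (simp_all add: natdist_def)
      moreover have "leaves (Node (mbt (p+1)) T1) = n" "leaves (Node (mbt (p+1)) T2) = n" using T mp od by simp_all
      ultimately show ?thesis using noniso_right[OF T(5)] by blast
    next
      assume ne: "\<not> exc (p+1)"
      then obtain T1 T2 where T: "leaves T1 = p+1" "leaves T2 = p+1" "colless T1 = g (p+1)" "colless T2 = g (p+1)"
        "\<not> btree_iso T1 T2" using less.IH[of "p+1"] p1 od by auto
      have "colless (Node T1 (mbt p)) = g n" "colless (Node T2 (mbt p)) = g n"
        using T mp gn by (simp_all add: natdist_def)
      moreover have "leaves (Node T1 (mbt p)) = n" "leaves (Node T2 (mbt p)) = n" using T mp od by simp_all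
      ultimately show ?thesis using noniso_left[OF T(5)] by blast
    qed
  qed
qed

theorem corollary7:
  fixes n :: nat
  assumes "n \<ge> 1"
  shows "((\<forall>m\<ge>1. n \<notin> {2^m - 1, 2^m, 2^m + 1}) \<longrightarrow>
            (\<forall>T1 T2. leaves T1 = n \<and> max_balanced T1 \<and> gfb_tree n T2
                 \<longrightarrow> \<not> btree_iso T1 T2) \<and>
            (\<exists>T1 T2. leaves T1 = n \<and> leaves T2 = n \<and>
                 colless T1 = min_colless n \<and> colless T2 = min_colless n \<and>
                 \<not> btree_iso T1 T2))
       \<and> ((\<exists>m\<ge>1. n \<in> {2^m - 1, 2^m, 2^m + 1}) \<longrightarrow>
            (\<exists>T. leaves T = n \<and> colless T = min_colless n \<and>
               (\<forall>T'. leaves T' = n \<and> colless T' = min_colless n \<longrightarrow> btree_iso T' T)))"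
proof (intro conjI impI)
  assume ne: "\<forall>m\<ge>1. n \<notin> {2^m - 1, 2^m, 2^m + 1}"
  then have nex: "\<not> exc n" unfolding exc_def by blast
  show "\<forall>T1 T2. leaves T1 = n \<and> max_balanced T1 \<and> gfb_tree n T2 \<longrightarrow> \<not> btree_iso T1 T2"
  proof (intro allI impI notI)
    fix T1 T2 assume h: "leaves T1 = n \<and> max_balanced T1 \<and> gfb_tree n T2" and i: "btree_iso T1 T2"
    have "max_balanced T2" using iso_mb[OF i] h by blast
    then have "exc (leaves T2)" using gfb_mb_exc h by blast
    moreover have "leaves T2 = n" using iso_leaves[OF i] h by simp
    ultimately show False using nex by simp
  qed
  show "\<exists>T1 T2. leaves T1 = n \<and> leaves T2 = n \<and>
                 colless T1 = min_colless n \<and> colless T2 = min_colless n \<and>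
                 \<not> btree_iso T1 T2" using two_opt[OF assms nex] min_colless_eq[OF assms] by simp
next
  assume "\<exists>m\<ge>1. n \<in> {2^m - 1, 2^m, 2^m + 1}"
  then have ex: "exc n" unfolding exc_def by blast
  show "\<exists>T. leaves T = n \<and> colless T = min_colless n \<and>
               (\<forall>T'. leaves T' = n \<and> colless T' = min_colless n \<longrightarrow> btree_iso T' T)"
    using mbt_props[OF assms] unique_exc[OF ex] min_colless_eq[OF assms] by auto
qed

end
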